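(* For every integer $N\ge2$ and every ORN design on $N$ nodes (with arbitrary, possibly unbounded, maximum latency) that guarantees throughput $r$, we have \[ r\;\le\;\frac12+\frac{1}{2(N-1)}. \]
   Context: Nodes are $[N]=\{1,\dots,N\}$. A connection schedule of size $N$ and period $T\ge1$ is a sequence of permutations $\pi_0,\dots,\pi_{T-1}$ of $[N]$; write $\pi_t=\pi_{t \bmod T}$ for all $t\in\mathbb Z$. Its virtual topology is the directed graph $G$ with vertex set $[N]\times\mathbb Z$ whose edges are the virtual edges $(i,t)\to(i,t+1)$ and the physical edges $(i,t)\to(\pi_t(i),t+1)$, for all $i\in[N]$, $t\in\mathbb Z$. The latency of a finite directed path in $G$ is its number of edges. For $a,b\in[N]$, $t\in\mathbb Z$, $\mathcal P(a,b,t)$ is the set of paths in $G$ from $(a,t)$ to some vertex $(b,t')$, and $\mathcal P$ is the set of all paths. A flow is a function $f:\mathcal P\to[0,\infty)$; the load on an edge $e$ is $F(f,e)=\sum_{P\ni e}f(P)$; $f$ is feasible if $F(f,e)\le 1$ for every physical edge $e$. An oblivious routing scheme $R$ assigns to each $(a,b,t)\in[N]\times[N]\times\mathbb Z$ a flow $R_{a,b,t}$ supported on $\mathcal P(a,b,t)$ with $\sum_P R_{a,b,t}(P)=1$, which is periodic: $R_{a,b,t+T}$ is obtained from $R_{a,b,t}$ by shifting every path by $T$ in the time coordinate. An ORN design on $N$ nodes is a connection schedule together with an oblivious routing scheme on its virtual topology. A demand function $D$ assigns to each $t\in\mathbb Z$ an $N\times N$ matrix $D(t)$ with nonnegative entries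 $D(t,a,b)$; it requests throughput equal to the supremum over $t$ of the maximum row sum or column sum of $D(t)$. The induced flow is $f(R,D)=\sum_{a,b,t}D(t,a,b)R_{a,b,t}$. The design guarantees throughput $r$ if $f(R,D)$ is feasible for every demand function $D$ requesting throughput at most $r$. *)

theory Defs
  imports "HOL-Analysis.Analysis" "HOL-Combinatorics.Permutations"
begin

definition connection_schedule :: "nat \<Rightarrow> nat \<Rightarrow> (nat \<Rightarrow> nat \<Rightarrow> nat) \<Rightarrow> bool" where
  "connection_schedule N T sch \<longleftrightarrow> T \<ge> 1 \<and> (\<forall>t<T. sch t permutes {1..N})"

definition sched :: "nat \<Rightarrow> (nat \<Rightarrow> nat \<Rightarrow> nat) \<Rightarrow> int \<Rightarrow> nat \<Rightarrow> nat" where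
  "sched T sch t = sch (nat (t mod int T))"

text \<open>Every edge of the virtual topology goes from time t to time t+1, and each
  vertex (i,t) has exactly two outgoing edges: the virtual one to (i,t+1) and the
  physical one to (pi_t i, t+1) (these are distinct edges even when pi_t i = i).
  Hence a finite path is determined by its start vertex and the list of choices
  (True = physical edge, False = virtual edge).  A physical edge is identified
  with its tail vertex.\<close>

type_synonym vertex = "nat \<times> int"
type_synonym path = "vertex \<times> bool list"

definition step :: "(int \<Rightarrow> nat \<Rightarrow> nat) \<Rightarrow> vertex \<Rightarrow> bool \<Rightarrow> vertex" where
  "step \<sigma> v c = (if c then (\<sigma> (snd v) (fst v), snd v + 1) else (fst v, snd v + 1))"

fun end_vertex :: "(int \<Rightarrow> nat \<Rightarrow> nat) \<Rightarrow> vertex \<Rightarrow> bool list \<Rightarrow> vertex" where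
  "end_vertex \<sigma> v [] = v"
| "end_vertex \<sigma> v (c # cs) = end_vertex \<sigma> (step \<sigma> v c) cs"

fun phys_edges :: "(int \<Rightarrow> nat \<Rightarrow> nat) \<Rightarrow> vertex \<Rightarrow> bool list \<Rightarrow> vertex set" where
  "phys_edges \<sigma> v [] = {}"
| "phys_edges \<sigma> v (c # cs) = (if c then {v} else {}) \<union> phys_edges \<sigma> (step \<sigma> v c) cs"

definition paths_from_to :: "(int \<Rightarrow> nat \<Rightarrow> nat) \<Rightarrow> nat \<Rightarrow> nat \<Rightarrow> int \<Rightarrow> path set" where
  "paths_from_to \<sigma> a b t = {P. fst P = (a, t) \<and> fst (end_vertex \<sigma> (fst P) (snd P)) = b}"

definition shift_path :: "nat \<Rightarrow> path \<Rightarrow> path" where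
  "shift_path T P = ((fst (fst P), snd (fst P) + int T), snd P)"

definition oblivious_routing ::
  "nat \<Rightarrow> nat \<Rightarrow> (nat \<Rightarrow> nat \<Rightarrow> nat) \<Rightarrow> (nat \<Rightarrow> nat \<Rightarrow> int \<Rightarrow> path \<Rightarrow> real) \<Rightarrow> bool" where
  "oblivious_routing N T sch R \<longleftrightarrow>
     (\<forall>a\<in>{1..N}. \<forall>b\<in>{1..N}. \<forall>t.
        (\<forall>P. R a b t P \<ge> 0)
      \<and> (\<forall>P. P \<notin> paths_from_to (sched T sch) a b t \<longrightarrow> R a b t P = 0)
      \<and> (\<Sum>\<^sub>\<infinity>P. ennreal (R a b t P)) = 1
      \<and> (\<forall>P. R a b (t + int T) (shift_path T P) = R a b t P))"

definition ORN_design ::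
  "nat \<Rightarrow> nat \<Rightarrow> (nat \<Rightarrow> nat \<Rightarrow> nat) \<Rightarrow> (nat \<Rightarrow> nat \<Rightarrow> int \<Rightarrow> path \<Rightarrow> real) \<Rightarrow> bool" where
  "ORN_design N T sch R \<longleftrightarrow> connection_schedule N T sch \<and> oblivious_routing N T sch R"

text \<open>D t a b = D(t,a,b) for a,b in {1..N}. It requests throughput at most r iff
  every row sum and column sum of every D(t) is at most r (the supremum of these
  is at most r).\<close>

definition demand_function :: "nat \<Rightarrow> (int \<Rightarrow> nat \<Rightarrow> nat \<Rightarrow> real) \<Rightarrow> bool" where
  "demand_function N D \<longleftrightarrow> (\<forall>t. \<forall>a\<in>{1..N}. \<forall>b\<in>{1..N}. D t a b \<ge> 0)"

definition requests_at_most :: "nat \<Rightarrow> (int \<Rightarrow> nat \<Rightarrow> nat \<Rightarrow> real) \<Rightarrow> real \<Rightarrow> bool" where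
  "requests_at_most N D r \<longleftrightarrow>
     (\<forall>t. (\<forall>a\<in>{1..N}. (\<Sum>b\<in>{1..N}. D t a b) \<le> r) \<and> (\<forall>b\<in>{1..N}. (\<Sum>a\<in>{1..N}. D t a b) \<le> r))"

text \<open>The induced flow f(R,D) on a path (valued in [0,\<infinity>], the sum being infinite).\<close>
definition induced_flow ::
  "nat \<Rightarrow> (nat \<Rightarrow> nat \<Rightarrow> int \<Rightarrow> path \<Rightarrow> real) \<Rightarrow> (int \<Rightarrow> nat \<Rightarrow> nat \<Rightarrow> real) \<Rightarrow> path \<Rightarrow> ennreal" where
  "induced_flow N R D P =
     (\<Sum>\<^sub>\<infinity>(a, b, t) \<in> {1..N} \<times> {1..N} \<times> (UNIV :: int set). ennreal (D t a b * R a b t P))"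

definition load :: "(int \<Rightarrow> nat \<Rightarrow> nat) \<Rightarrow> (path \<Rightarrow> ennreal) \<Rightarrow> vertex \<Rightarrow> ennreal" where
  "load \<sigma> f e = (\<Sum>\<^sub>\<infinity>P \<in> {P. e \<in> phys_edges \<sigma> (fst P) (snd P)}. f P)"

definition feasible :: "nat \<Rightarrow> (int \<Rightarrow> nat \<Rightarrow> nat) \<Rightarrow> (path \<Rightarrow> ennreal) \<Rightarrow> bool" where
  "feasible N \<sigma> f \<longleftrightarrow> (\<forall>i\<in>{1..N}. \<forall>t. load \<sigma> f (i, t) \<le> 1)"

definition guarantees_throughput ::
  "nat \<Rightarrow> nat \<Rightarrow> (nat \<Rightarrow> nat \<Rightarrow> nat) \<Rightarrow> (nat \<Rightarrow> nat \<Rightarrow> int \<Rightarrow> path \<Rightarrow> real) \<Rightarrow> real \<Rightarrow> bool" where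
  "guarantees_throughput N T sch R r \<longleftrightarrow>
     (\<forall>D. demand_function N D \<and> requests_at_most N D r \<longrightarrow>
          feasible N (sched T sch) (induced_flow N R D))"

end

theory Submission
  imports Defs
begin

lemma ennr_summable[simp]: "(f::'b \<Rightarrow> ennreal) summable_on A"
  by (simp add: nonneg_summable_on_complete)

lemma ennr_subset:
  fixes f :: "'b \<Rightarrow> ennreal"
  assumes "A \<subseteq> B"
  shows "infsum f A \<le> infsum f B"
  by (rule infsum_mono_neutral) (use assms in auto)

lemma ennr_Sigma_fin:
  fixes f :: "'b \<times> 'c \<Rightarrow> ennreal"
  assumes "finite X"
  shows "infsum f (Sigma X B) = (\<Sum>x\<in>X. infsum (\<lambda>y. f (x,y)) (B x))"
  using assms
proof (induction X rule: finite_induct)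
  case empty
  then show ?case by simp
next
  case (insert x X)
  have eq: "Sigma (insert x X) B = Pair x ` B x \<union> Sigma X B" by auto
  have d: "Pair x ` B x \<inter> Sigma X B = {}" using insert.hyps(2) by auto
  have "infsum f (Sigma (insert x X) B) = infsum f (Pair x ` B x) + infsum f (Sigma X B)"
    unfolding eq by (rule infsum_Un_disjoint[OF ennr_summable ennr_summable d])
  also have "infsum f (Pair x ` B x) = infsum (f \<circ> Pair x) (B x)"
    by (rule infsum_reindex) (auto simp: inj_on_def)
  finally show ?case using insert by (simp add: o_def)
qed

lemma ennr_Sigma:
  fixes f :: "'b \<times> 'c \<Rightarrow> ennreal"
  shows "infsum f (Sigma A B) = infsum (\<lambda>x. infsum (\<lambda>y. f (x,y)) (B x)) A"
proof (rule antisym)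
  let ?g = "\<lambda>x. infsum (\<lambda>y. f (x,y)) (B x)"
  have "infsum f (Sigma A B) = (SUP F\<in>{F. finite F \<and> F \<subseteq> Sigma A B}. sum f F)"
    by (rule nonneg_infsum_complete) (rule zero_le)
  also have "\<dots> \<le> infsum ?g A"
  proof (rule SUP_least)
    fix F assume F: "F \<in> {F. finite F \<and> F \<subseteq> Sigma A B}"
    let ?X = "fst ` F"
    have fX: "finite ?X" using F by auto
    have XA: "?X \<subseteq> A" using F by auto
    have FS: "F \<subseteq> Sigma ?X B" using F by force
    have "sum f F = infsum f F" using F by simp
    also have "\<dots> \<le> infsum f (Sigma ?X B)" by (rule ennr_subset[OF FS])
    also have "\<dots> = sum ?g ?X" by (rule ennr_Sigma_fin[OF fX])
    also have "\<dots> = infsum ?g ?X" using fX by simp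
    also have "\<dots> \<le> infsum ?g A" by (rule ennr_subset[OF XA])
    finally show "sum f F \<le> infsum ?g A" .
  qed
  finally show "infsum f (Sigma A B) \<le> infsum ?g A" .
next
  let ?g = "\<lambda>x. infsum (\<lambda>y. f (x,y)) (B x)"
  have "infsum ?g A = (SUP X\<in>{X. finite X \<and> X \<subseteq> A}. sum ?g X)"
    by (rule nonneg_infsum_complete) (rule zero_le)
  also have "\<dots> \<le> infsum f (Sigma A B)"
  proof (rule SUP_least)
    fix X assume X: "X \<in> {X. finite X \<and> X \<subseteq> A}"
    have "sum ?g X = infsum f (Sigma X B)" using X by (simp add: ennr_Sigma_fin)
    also have "\<dots> \<le> infsum f (Sigma A B)" by (rule ennr_subset) (use X in auto)
    finally show "sum ?g X \<le> infsum f (Sigma A B)" .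
  qed
  finally show "infsum ?g A \<le> infsum f (Sigma A B)" .
qed

lemma ennr_swap:
  fixes f :: "'b \<Rightarrow> 'c \<Rightarrow> ennreal"
  shows "infsum (\<lambda>x. infsum (\<lambda>y. f x y) B) A = infsum (\<lambda>y. infsum (\<lambda>x. f x y) A) B"
proof -
  have "infsum (\<lambda>x. infsum (\<lambda>y. f x y) B) A = infsum (\<lambda>(x,y). f x y) (A \<times> B)"
    using ennr_Sigma[of "\<lambda>(x,y). f x y" A "\<lambda>_. B"] by simp
  also have "\<dots> = infsum (\<lambda>(y,x). f x y) (B \<times> A)"
  proof -
    have "((\<lambda>(x,y). f x y) has_sum infsum (\<lambda>(x,y). f x y) (A \<times> B)) (A \<times> B)"
      by (rule has_sum_infsum) simp
    from has_sum_swap[THEN iffD1, OF this] have "((\<lambda>(y,x). f x y) has_sum infsum (\<lambda>(x,y). f x y) (A \<times> B)) (B \<times> A)"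
      by (simp add: case_prod_unfold)
    from infsumI[OF this] show ?thesis by simp
  qed
  also have "\<dots> = infsum (\<lambda>y. infsum (\<lambda>x. f x y) A) B"
    using ennr_Sigma[of "\<lambda>(y,x). f x y" B "\<lambda>_. A"] by simp
  finally show ?thesis .
qed

lemma ennr_cmult:
  fixes f :: "'b \<Rightarrow> ennreal"
  shows "infsum (\<lambda>x. c * f x) A = c * infsum f A"
proof -
  let ?F = "{F. finite F \<and> F \<subseteq> A}"
  have "infsum (\<lambda>x. c * f x) A = (SUP F\<in>?F. sum (\<lambda>x. c * f x) F)"
    by (rule nonneg_infsum_complete) (rule zero_le)
  also have "\<dots> = (SUP F\<in>?F. c * sum f F)"
    by (simp only: sum_distrib_left)
  also have "\<dots> = c * (SUP F\<in>?F. sum f F)"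
    by (rule SUP_mult_left_ennreal[symmetric])
  also have "(SUP F\<in>?F. sum f F) = infsum f A"
    by (rule nonneg_infsum_complete[symmetric]) (rule zero_le)
  finally show ?thesis .
qed

lemma ennr_cmult_right:
  fixes f :: "'b \<Rightarrow> ennreal"
  shows "infsum (\<lambda>x. f x * c) A = infsum f A * c"
  using ennr_cmult[of c f A] by (simp add: mult.commute)

lemma ennr_add:
  fixes f g :: "'b \<Rightarrow> ennreal"
  shows "infsum (\<lambda>x. f x + g x) A = infsum f A + infsum g A"
  by (rule infsum_add) (rule ennr_summable)+

lemma ennr_sum:
  fixes f :: "'i \<Rightarrow> 'b \<Rightarrow> ennreal"
  assumes "finite I"
  shows "infsum (\<lambda>x. \<Sum>i\<in>I. f i x) A = (\<Sum>i\<in>I. infsum (f i) A)"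
  using assms by (induction I rule: finite_induct) (simp_all add: ennr_add)

lemma ennr_mono:
  fixes f g :: "'b \<Rightarrow> ennreal"
  assumes "\<And>x. x \<in> A \<Longrightarrow> f x \<le> g x"
  shows "infsum f A \<le> infsum g A"
  by (rule infsum_mono) (rule ennr_summable, rule ennr_summable, rule assms)

lemma ennr_single:
  "infsum (\<lambda>k. if k = k0 then (c::ennreal) else 0) UNIV = c"
proof -
  have "infsum (\<lambda>k. if k = k0 then (c::ennreal) else 0) UNIV = infsum (\<lambda>k. c) {k0}"
    by (rule infsum_cong_neutral) auto
  then show ?thesis by simp
qed


lemma pe_finite: "finite (phys_edges \<sigma> v cs)"
  by (induction cs arbitrary: v) auto

lemma pe_time: "e \<in> phys_edges \<sigma> v cs \<Longrightarrow> snd v \<le> snd e"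
proof (induction cs arbitrary: v)
  case Nil then show ?case by simp
next
  case (Cons c cs)
  show ?case
  proof (cases "e = v")
    case True then show ?thesis by simp
  next
    case False
    then have "e \<in> phys_edges \<sigma> (step \<sigma> v c) cs" using Cons.prems by (auto split: if_splits)
    then have "snd (step \<sigma> v c) \<le> snd e" by (rule Cons.IH)
    then show ?thesis by (simp add: step_def split: if_splits)
  qed
qed

lemma pe_empty_end: "phys_edges \<sigma> v cs = {} \<Longrightarrow> fst (end_vertex \<sigma> v cs) = fst v"
proof (induction cs arbitrary: v)
  case Nil then show ?case by simp
next
  case (Cons c cs)
  then have c: "\<not> c" by (auto split: if_splits)
  then have "phys_edges \<sigma> (step \<sigma> v c) cs = {}" using Cons.prems by simp
  from Cons.IH[OF this] c show ?case by (simp add: step_def)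
qed

lemma pe_two:
  "fst (end_vertex \<sigma> v cs) \<noteq> fst v \<Longrightarrow>
     2 \<le> card (phys_edges \<sigma> v cs) \<or>
     (\<exists>u. (fst v, u) \<in> phys_edges \<sigma> v cs \<and> \<sigma> u (fst v) = fst (end_vertex \<sigma> v cs))"
proof (induction cs arbitrary: v)
  case Nil then show ?case by simp
next
  case (Cons c cs)
  show ?case
  proof (cases c)
    case False
    then have st: "step \<sigma> v c = (fst v, snd v + 1)" by (simp add: step_def)
    have "fst (end_vertex \<sigma> (step \<sigma> v c) cs) \<noteq> fst (step \<sigma> v c)"
      using Cons.prems st by simp
    from Cons.IH[OF this] show ?thesis using st False by simp
  next
    case True
    let ?v' = "step \<sigma> v c"
    have st: "?v' = (\<sigma> (snd v) (fst v), snd v + 1)" using True by (simp add: step_def)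
    have pe: "phys_edges \<sigma> v (c # cs) = insert v (phys_edges \<sigma> ?v' cs)" using True by simp
    show ?thesis
    proof (cases "phys_edges \<sigma> ?v' cs = {}")
      case True
      from pe_empty_end[OF this] st have "fst (end_vertex \<sigma> v (c # cs)) = \<sigma> (snd v) (fst v)"
        by simp
      then show ?thesis using pe by (intro disjI2 exI[of _ "snd v"]) (cases v, auto)
    next
      case False
      then obtain e where e: "e \<in> phys_edges \<sigma> ?v' cs" by blast
      have "snd ?v' \<le> snd e" by (rule pe_time[OF e])
      then have ne: "e \<noteq> v" using st by auto
      have "{v, e} \<subseteq> phys_edges \<sigma> v (c # cs)" using pe e by auto
      then have "card {v, e} \<le> card (phys_edges \<sigma> v (c # cs))"
        by (rule card_mono[OF pe_finite])
      then show ?thesis using ne by simp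
    qed
  qed
qed

lemma pe_shift:
  assumes per: "\<And>t. \<sigma> (t + p) = \<sigma> t"
  shows "phys_edges \<sigma> (x, t + p) cs = (\<lambda>(j,u). (j, u + p)) ` phys_edges \<sigma> (x, t) cs
       \<and> fst (end_vertex \<sigma> (x, t + p) cs) = fst (end_vertex \<sigma> (x, t) cs)"
proof (induction cs arbitrary: x t)
  case Nil then show ?case by simp
next
  case (Cons c cs)
  define y where "y = fst (step \<sigma> (x, t) c)"
  have s1: "step \<sigma> (x, t + p) c = (y, (t + 1) + p)"
    by (simp add: step_def per y_def)
  have s2: "step \<sigma> (x, t) c = (y, t + 1)"
    by (simp add: step_def y_def)
  have IH: "phys_edges \<sigma> (y, (t + 1) + p) cs =
       (\<lambda>(j,u). (j, u + p)) ` phys_edges \<sigma> (y, t + 1) cs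
      \<and> fst (end_vertex \<sigma> (y, (t + 1) + p) cs) = fst (end_vertex \<sigma> (y, t + 1) cs)"
    by (rule Cons.IH)
  have e1: "phys_edges \<sigma> (x, t + p) (c # cs) = (if c then {(x, t + p)} else {}) \<union> phys_edges \<sigma> (y, (t + 1) + p) cs"
    by (simp only: phys_edges.simps s1)
  have e2: "phys_edges \<sigma> (x, t) (c # cs) = (if c then {(x, t)} else {}) \<union> phys_edges \<sigma> (y, t + 1) cs"
    by (simp only: phys_edges.simps s2)
  have e3: "end_vertex \<sigma> (x, t + p) (c # cs) = end_vertex \<sigma> (y, (t + 1) + p) cs"
    by (simp only: end_vertex.simps s1)
  have e4: "end_vertex \<sigma> (x, t) (c # cs) = end_vertex \<sigma> (y, t + 1) cs"
    by (simp only: end_vertex.simps s2)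
  show ?case
    unfolding e1 e2 e3 e4 using IH by (cases c) (simp_all add: image_Un)
qed

lemma sched_per: "T \<ge> 1 \<Longrightarrow> sched T sch (t + k * int T) = sched T sch t"
  by (simp add: sched_def)

lemma sched_perm: "connection_schedule N T sch \<Longrightarrow> sched T sch t permutes {1..N}"
proof -
  assume cs: "connection_schedule N T sch"
  then have T: "T \<ge> 1" by (simp add: connection_schedule_def)
  have "nat (t mod int T) < T" using T by (simp add: nat_less_iff)
  then show ?thesis using cs by (simp add: connection_schedule_def sched_def)
qed

lemma pe_in:
  assumes "\<And>t x. x \<in> {1..N} \<Longrightarrow> \<sigma> t x \<in> {1..N}"
  shows "fst v \<in> {1..N} \<Longrightarrow> phys_edges \<sigma> v cs \<subseteq> {1..N} \<times> UNIV"
proof (induction cs arbitrary: v)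
  case Nil then show ?case by simp
next
  case (Cons c cs)
  have "fst (step \<sigma> v c) \<in> {1..N}" using Cons.prems assms by (simp add: step_def)
  note IH = Cons.IH[OF this]
  have vin: "v \<in> {1..N} \<times> UNIV" using Cons.prems by (cases v) simp
  show ?case using IH vin by (cases c) simp_all
qed

definition shk :: "nat \<Rightarrow> int \<Rightarrow> path \<Rightarrow> path" where
  "shk T k P = ((fst (fst P), snd (fst P) + k * int T), snd P)"

lemma R_per_nat:
  assumes "\<And>t P. R (t + int T) (shift_path T P) = (R t P :: real)"
  shows "R (t + int n * int T) (shk T (int n) P) = R t P"
proof (induction n)
  case 0 then show ?case by (simp add: shk_def)
next
  case (Suc n)
  have "R (t + int (Suc n) * int T) (shk T (int (Suc n)) P)
      = R ((t + int n * int T) + int T) (shift_path T (shk T (int n) P))"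
    by (simp add: shk_def shift_path_def algebra_simps)
  also have "\<dots> = R (t + int n * int T) (shk T (int n) P)" by (rule assms)
  finally show ?case using Suc by simp
qed

lemma R_per:
  assumes "\<And>t P. R (t + int T) (shift_path T P) = (R t P :: real)"
  shows "R (t + k * int T) (shk T k P) = R t P"
proof (cases "k \<ge> 0")
  case True
  define n where "n = nat k"
  have "k = int n" using True by (simp add: n_def)
  then show ?thesis using R_per_nat[where R=R and T=T, OF assms] by simp
next
  case False
  define n where "n = nat (- k)"
  have k: "k = - int n" using False by (simp add: n_def)
  have "R ((t + k * int T) + int n * int T) (shk T (int n) (shk T k P)) = R (t + k * int T) (shk T k P)"
    by (rule R_per_nat[where R=R and T=T, OF assms])
  moreover have "shk T (int n) (shk T k P) = P" using k by (simp add: shk_def algebra_simps)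
  moreover have "(t + k * int T) + int n * int T = t" using k by (simp add: algebra_simps)
  ultimately show ?thesis by simp
qed


lemma int_window:
  fixes u k :: int and T :: nat
  assumes "T \<ge> 1"
  shows "(0 \<le> u + k * int T \<and> u + k * int T < int T) \<longleftrightarrow> k = - (u div int T)"
proof -
  define q where "q = u div int T"
  define m where "m = u mod int T"
  have Tp: "int T > 0" using assms by simp
  have u: "u = q * int T + m" by (simp add: q_def m_def)
  have m: "0 \<le> m" "m < int T" using Tp by (simp_all add: m_def)
  have eq: "u + k * int T = (q + k) * int T + m" using u by (simp add: algebra_simps)
  show ?thesis
  proof
    assume H: "0 \<le> u + k * int T \<and> u + k * int T < int T"
    show "k = - (u div int T)"
    proof (rule ccontr)
      assume "k \<noteq> - (u div int T)"
      then have "q + k \<ge> 1 \<or> q + k \<le> -1" by (auto simp: q_def)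
      then show False
      proof
        assume "q + k \<ge> 1"
        then have "(q + k) * int T \<ge> 1 * int T" using Tp by (intro mult_right_mono) auto
        then show False using H eq m by linarith
      next
        assume "q + k \<le> -1"
        then have "(q + k) * int T \<le> (-1) * int T" using Tp by (intro mult_right_mono) auto
        then show False using H eq m by linarith
      qed
    qed
  next
    assume "k = - (u div int T)"
    then have "u + k * int T = m" using eq by (simp add: q_def)
    then show "0 \<le> u + k * int T \<and> u + k * int T < int T" using m by simp
  qed
qed

lemma ennr_indic_unique:
  assumes "\<And>k. P k \<longleftrightarrow> k = k0"
  shows "infsum (\<lambda>k. if P k then (c::ennreal) else 0) UNIV = c"
proof -
  have "infsum (\<lambda>k. if P k then (c::ennreal) else 0) UNIV = infsum (\<lambda>k. if P k then c else 0) {k0}"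
    by (rule infsum_cong_neutral) (use assms in auto)
  also have "\<dots> = c" using assms by (subst infsum_finite) simp_all
  finally show ?thesis .
qed

lemma card_filter_ennr:
  assumes "finite A"
  shows "(of_nat (card {e\<in>A. P e}) :: ennreal) = (\<Sum>e\<in>A. if P e then 1 else 0)"
proof -
  have "(\<Sum>e\<in>A. if P e then 1 else 0) = (\<Sum>e\<in>{e\<in>A. P e}. (1::ennreal))"
    by (rule sum.inter_filter[symmetric, OF assms])
  then show ?thesis by simp
qed

lemma count_shift:
  fixes A E :: "vertex set" and T :: nat
  assumes fin: "finite A" and T: "T \<ge> 1" and Eper: "\<And>i t. (i,t) \<in> E \<longleftrightarrow> (i, t mod int T) \<in> E"
  shows "infsum (\<lambda>k. of_nat (card ((\<lambda>(j,u). (j, u + k * int T)) ` A \<inter> (E \<inter> (UNIV \<times> {0..<int T})))) :: ennreal) UNIV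
         = of_nat (card (A \<inter> E))"
proof -
  define P where "P k e \<longleftrightarrow> e \<in> E \<and> 0 \<le> snd e + k * int T \<and> snd e + k * int T < int T" for k e
  have c: "(\<lambda>(j,u). (j, u + k * int T)) ` A \<inter> (E \<inter> (UNIV \<times> {0..<int T}))
           = (\<lambda>(j,u). (j, u + k * int T)) ` {e\<in>A. P k e}" for k
  proof -
    have m: "(j, u + k * int T) \<in> E \<longleftrightarrow> (j, u) \<in> E" for j u
      using Eper[of j "u + k * int T"] Eper[of j u] by simp
    show ?thesis unfolding P_def by (auto simp: m image_iff)
  qed
  have inj: "inj_on (\<lambda>(j,u). (j, u + k * int T)) B" for k and B :: "vertex set"
    by (auto simp: inj_on_def)
  have "infsum (\<lambda>k. of_nat (card ((\<lambda>(j,u). (j, u + k * int T)) ` A \<inter> (E \<inter> (UNIV \<times> {0..<int T})))) :: ennreal) UNIV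
      = infsum (\<lambda>k. \<Sum>e\<in>A. if P k e then 1 else 0) UNIV"
    by (simp only: c card_image[OF inj] card_filter_ennr[OF fin])
  also have "\<dots> = (\<Sum>e\<in>A. infsum (\<lambda>k. if P k e then (1::ennreal) else 0) UNIV)"
    by (rule ennr_sum[OF fin])
  also have "\<dots> = (\<Sum>e\<in>A. if e \<in> E then 1 else 0)"
  proof (rule sum.cong)
    fix e assume "e \<in> A"
    show "infsum (\<lambda>k. if P k e then (1::ennreal) else 0) UNIV = (if e \<in> E then 1 else 0)"
    proof (cases "e \<in> E")
      case True
      have "P k e \<longleftrightarrow> k = - (snd e div int T)" for k
        using True int_window[OF T, of "snd e" k] by (simp add: P_def)
      then show ?thesis using True by (simp add: ennr_indic_unique)
    next
      case False
      then show ?thesis by (simp add: P_def)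
    qed
  qed simp
  also have "\<dots> = of_nat (card (A \<inter> E))"
    using card_filter_ennr[OF fin, of "\<lambda>e. e \<in> E"] by (simp add: Int_def)
  finally show ?thesis .
qed


lemma split_time:
  fixes H :: "int \<Rightarrow> ennreal"
  assumes T: "T \<ge> 1"
  shows "infsum H UNIV = (\<Sum>s\<in>{0..<int T}. infsum (\<lambda>k. H (s + k * int T)) UNIV)"
proof -
  have Tp: "int T > 0" using T by simp
  have bij: "bij_betw (\<lambda>(s,k). s + k * int T) ({0..<int T} \<times> UNIV) UNIV"
  proof (rule bij_betwI[where g="\<lambda>t. (t mod int T, t div int T)"])
    show "(\<lambda>(s,k). s + k * int T) \<in> {0..<int T} \<times> UNIV \<rightarrow> UNIV" by simp
    show "(\<lambda>t. (t mod int T, t div int T)) \<in> UNIV \<rightarrow> {0..<int T} \<times> UNIV" using Tp by simp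
    fix x assume "x \<in> {0..<int T} \<times> (UNIV :: int set)"
    then obtain s k where x: "x = (s,k)" "0 \<le> s" "s < int T" by auto
    have "(s + k * int T) mod int T = s" using x by simp
    moreover have "(s + k * int T) div int T = k" using x Tp by simp
    ultimately show "((case x of (s, k) \<Rightarrow> s + k * int T) mod int T, (case x of (s, k) \<Rightarrow> s + k * int T) div int T) = x"
      using x by simp
  next
    fix y :: int
    show "(case (y mod int T, y div int T) of (s, k) \<Rightarrow> s + k * int T) = y" by simp
  qed
  have "infsum H UNIV = infsum (\<lambda>x. H ((\<lambda>(s,k). s + k * int T) x)) ({0..<int T} \<times> UNIV)"
    by (rule infsum_reindex_bij_betw[OF bij, symmetric])
  also have "\<dots> = infsum (\<lambda>s. infsum (\<lambda>k. H (s + k * int T)) UNIV) {0..<int T}"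
    by (subst ennr_Sigma) simp
  also have "\<dots> = (\<Sum>s\<in>{0..<int T}. infsum (\<lambda>k. H (s + k * int T)) UNIV)"
    by simp
  finally show ?thesis .
qed

lemma reindex_shk:
  fixes h :: "path \<Rightarrow> ennreal"
  shows "infsum h UNIV = infsum (\<lambda>Q. h (shk T k Q)) UNIV"
proof -
  have bij: "bij_betw (shk T k) UNIV UNIV"
    by (rule bij_betwI[where g="shk T (-k)"]) (auto simp: shk_def algebra_simps)
  show ?thesis by (rule infsum_reindex_bij_betw[OF bij, symmetric])
qed


lemma pair_sum:
  fixes G :: "nat \<Rightarrow> nat \<Rightarrow> int \<Rightarrow> ennreal"
  shows "infsum (\<lambda>(a,b,t). G a b t) ({1..N} \<times> {1..N} \<times> UNIV)
         = (\<Sum>a\<in>{1..N}. \<Sum>b\<in>{1..N}. infsum (G a b) UNIV)"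
proof -
  have "infsum (\<lambda>(a,b,t). G a b t) ({1..N} \<times> {1..N} \<times> UNIV)
      = infsum (\<lambda>a. infsum (\<lambda>y. (\<lambda>(a,b,t). G a b t) (a,y)) ({1..N} \<times> UNIV)) {1..N}"
    by (rule ennr_Sigma)
  also have "\<dots> = (\<Sum>a\<in>{1..N}. infsum (\<lambda>(b,t). G a b t) ({1..N} \<times> UNIV))"
    by (simp add: case_prod_unfold)
  also have "\<dots> = (\<Sum>a\<in>{1..N}. \<Sum>b\<in>{1..N}. infsum (G a b) UNIV)"
  proof (rule sum.cong)
    fix a
    have "infsum (\<lambda>(b,t). G a b t) ({1..N} \<times> UNIV) = infsum (\<lambda>b. infsum (\<lambda>t. (\<lambda>(b,t). G a b t) (b,t)) UNIV) {1..N}"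
      by (rule ennr_Sigma)
    then show "infsum (\<lambda>(b,t). G a b t) ({1..N} \<times> UNIV) = (\<Sum>b\<in>{1..N}. infsum (G a b) UNIV)"
      by simp
  qed simp
  finally show ?thesis .
qed

lemma main_count:
  fixes N T :: nat and sch :: "nat \<Rightarrow> nat \<Rightarrow> nat"
    and R :: "nat \<Rightarrow> nat \<Rightarrow> int \<Rightarrow> path \<Rightarrow> real" and M :: "nat \<Rightarrow> nat \<Rightarrow> real"
    and E :: "vertex set"
  assumes orn: "ORN_design N T sch R"
    and Mnn: "\<And>a b. a \<in> {1..N} \<Longrightarrow> b \<in> {1..N} \<Longrightarrow> M a b \<ge> 0"
    and feas: "feasible N (sched T sch) (induced_flow N R (\<lambda>t. M))"
    and EN: "E \<subseteq> {1..N} \<times> UNIV"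
    and Eper: "\<And>i t. (i,t) \<in> E \<longleftrightarrow> (i, t mod int T) \<in> E"
  shows "(\<Sum>a\<in>{1..N}. \<Sum>b\<in>{1..N}. ennreal (M a b) *
            (\<Sum>s\<in>{0..<int T}. infsum (\<lambda>P. ennreal (R a b s P) *
                 of_nat (card (phys_edges (sched T sch) (fst P) (snd P) \<inter> E))) UNIV))
         \<le> of_nat (card (E \<inter> (UNIV \<times> {0..<int T})))"
proof -
  let ?\<sigma> = "sched T sch"
  let ?PE = "\<lambda>P. phys_edges ?\<sigma> (fst P) (snd P)"
  have T: "T \<ge> 1" using orn by (simp add: ORN_design_def connection_schedule_def)
  have ob: "oblivious_routing N T sch R" using orn by (simp add: ORN_design_def)
  have Rnn: "\<And>a b t P. a \<in> {1..N} \<Longrightarrow> b \<in> {1..N} \<Longrightarrow> R a b t P \<ge> 0"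
    using ob unfolding oblivious_routing_def by blast
  have Rper: "\<And>a b t P. a \<in> {1..N} \<Longrightarrow> b \<in> {1..N} \<Longrightarrow> R a b (t + int T) (shift_path T P) = R a b t P"
    using ob unfolding oblivious_routing_def by blast
  define EW where "EW = E \<inter> (UNIV \<times> {0..<int T})"
  have finEW: "finite EW"
  proof (rule finite_subset)
    show "EW \<subseteq> {1..N} \<times> {0..<int T}" using EN by (auto simp: EW_def)
  qed simp
  define f where "f = induced_flow N R (\<lambda>t. M)"
  define c where "c P = (of_nat (card (?PE P \<inter> EW)) :: ennreal)" for P
  have S1: "(\<Sum>e\<in>EW. load ?\<sigma> f e) \<le> of_nat (card EW)"
  proof -
    have "(\<Sum>e\<in>EW. load ?\<sigma> f e) \<le> (\<Sum>e\<in>EW. 1)"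
    proof (rule sum_mono)
      fix e assume e: "e \<in> EW"
      then obtain i t where it: "e = (i,t)" "i \<in> {1..N}" using EN by (auto simp: EW_def)
      then show "load ?\<sigma> f e \<le> 1" using feas by (simp add: feasible_def f_def)
    qed
    then show ?thesis by simp
  qed
  have S2: "(\<Sum>e\<in>EW. load ?\<sigma> f e) = infsum (\<lambda>P. f P * c P) UNIV"
  proof -
    have l: "load ?\<sigma> f e = infsum (\<lambda>P. if e \<in> ?PE P then f P else 0) UNIV" for e
      unfolding load_def by (rule infsum_cong_neutral) auto
    have "(\<Sum>e\<in>EW. load ?\<sigma> f e) = (\<Sum>e\<in>EW. infsum (\<lambda>P. if e \<in> ?PE P then f P else 0) UNIV)"
      by (simp only: l)
    also have "\<dots> = infsum (\<lambda>P. \<Sum>e\<in>EW. if e \<in> ?PE P then f P else 0) UNIV"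
      by (rule ennr_sum[OF finEW, symmetric])
    also have "\<dots> = infsum (\<lambda>P. f P * c P) UNIV"
    proof (rule infsum_cong)
      fix P
      have "(\<Sum>e\<in>EW. if e \<in> ?PE P then f P else 0) = (\<Sum>e\<in>{e\<in>EW. e \<in> ?PE P}. f P)"
        by (rule sum.inter_filter[symmetric, OF finEW])
      also have "{e\<in>EW. e \<in> ?PE P} = ?PE P \<inter> EW" by auto
      finally show "(\<Sum>e\<in>EW. if e \<in> ?PE P then f P else 0) = f P * c P"
        by (simp add: c_def mult.commute)
    qed
    finally show ?thesis .
  qed
  have S3: "infsum (\<lambda>P. f P * c P) UNIV =
     (\<Sum>a\<in>{1..N}. \<Sum>b\<in>{1..N}. infsum (\<lambda>t. infsum (\<lambda>P. ennreal (M a b * R a b t P) * c P) UNIV) UNIV)"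
  proof -
    have "infsum (\<lambda>P. f P * c P) UNIV =
        infsum (\<lambda>P. infsum (\<lambda>x. (\<lambda>(a,b,t). ennreal (M a b * R a b t P) * c P) x) ({1..N} \<times> {1..N} \<times> UNIV)) UNIV"
      unfolding f_def induced_flow_def
      by (rule infsum_cong) (simp add: ennr_cmult_right[symmetric] case_prod_unfold)
    also have "\<dots> = infsum (\<lambda>x. infsum (\<lambda>P. (\<lambda>(a,b,t). ennreal (M a b * R a b t P) * c P) x) UNIV) ({1..N} \<times> {1..N} \<times> UNIV)"
      by (rule ennr_swap)
    also have "\<dots> = infsum (\<lambda>(a,b,t). infsum (\<lambda>P. ennreal (M a b * R a b t P) * c P) UNIV) ({1..N} \<times> {1..N} \<times> UNIV)"
      by (simp add: case_prod_unfold)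
    also have "\<dots> = (\<Sum>a\<in>{1..N}. \<Sum>b\<in>{1..N}. infsum (\<lambda>t. infsum (\<lambda>P. ennreal (M a b * R a b t P) * c P) UNIV) UNIV)"
      by (rule pair_sum)
    finally show ?thesis .
  qed
  have S4: "infsum (\<lambda>t. infsum (\<lambda>P. ennreal (M a b * R a b t P) * c P) UNIV) UNIV
      = ennreal (M a b) * (\<Sum>s\<in>{0..<int T}. infsum (\<lambda>P. ennreal (R a b s P) *
                 of_nat (card (?PE P \<inter> E))) UNIV)"
    if a: "a \<in> {1..N}" and b: "b \<in> {1..N}" for a b
  proof -
    have per: "\<And>t. ?\<sigma> (t + k * int T) = ?\<sigma> t" for k by (rule sched_per[OF T])
    have cs: "c (shk T k Q) = of_nat (card ((\<lambda>(j,u). (j, u + k * int T)) ` ?PE Q \<inter> EW))" for k Q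
    proof -
      have "?PE (shk T k Q) = phys_edges ?\<sigma> (fst (fst Q), snd (fst Q) + k * int T) (snd Q)"
        by (simp add: shk_def)
      also have "\<dots> = (\<lambda>(j,u). (j, u + k * int T)) ` phys_edges ?\<sigma> (fst (fst Q), snd (fst Q)) (snd Q)"
        using pe_shift[of ?\<sigma> "k * int T", OF per] by blast
      finally show ?thesis by (simp add: c_def)
    qed
    have "infsum (\<lambda>t. infsum (\<lambda>P. ennreal (M a b * R a b t P) * c P) UNIV) UNIV
       = (\<Sum>s\<in>{0..<int T}. infsum (\<lambda>k. infsum (\<lambda>P. ennreal (M a b * R a b (s + k * int T) P) * c P) UNIV) UNIV)"
      by (rule split_time[OF T])
    also have "\<dots> = (\<Sum>s\<in>{0..<int T}. ennreal (M a b) * infsum (\<lambda>P. ennreal (R a b s P) *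
                 of_nat (card (?PE P \<inter> E))) UNIV)"
    proof (rule sum.cong)
      fix s :: int
      have "infsum (\<lambda>k. infsum (\<lambda>P. ennreal (M a b * R a b (s + k * int T) P) * c P) UNIV) UNIV
          = infsum (\<lambda>k. infsum (\<lambda>Q. ennreal (M a b * R a b s Q) * c (shk T k Q)) UNIV) UNIV"
      proof (rule infsum_cong)
        fix k
        have "infsum (\<lambda>P. ennreal (M a b * R a b (s + k * int T) P) * c P) UNIV
            = infsum (\<lambda>Q. ennreal (M a b * R a b (s + k * int T) (shk T k Q)) * c (shk T k Q)) UNIV"
          by (rule reindex_shk)
        also have "\<dots> = infsum (\<lambda>Q. ennreal (M a b * R a b s Q) * c (shk T k Q)) UNIV"
          using R_per[where R="R a b" and T=T, OF Rper[OF a b]] by simp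
        finally show "infsum (\<lambda>P. ennreal (M a b * R a b (s + k * int T) P) * c P) UNIV
            = infsum (\<lambda>Q. ennreal (M a b * R a b s Q) * c (shk T k Q)) UNIV" .
      qed
      also have "\<dots> = infsum (\<lambda>Q. infsum (\<lambda>k. ennreal (M a b * R a b s Q) * c (shk T k Q)) UNIV) UNIV"
        by (rule ennr_swap)
      also have "\<dots> = infsum (\<lambda>Q. ennreal (M a b * R a b s Q) * infsum (\<lambda>k. c (shk T k Q)) UNIV) UNIV"
        by (simp only: ennr_cmult)
      also have "\<dots> = infsum (\<lambda>Q. ennreal (M a b) * (ennreal (R a b s Q) * of_nat (card (?PE Q \<inter> E)))) UNIV"
      proof (rule infsum_cong)
        fix Q
        have "infsum (\<lambda>k. c (shk T k Q)) UNIV = of_nat (card (?PE Q \<inter> E))"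
          unfolding cs EW_def by (rule count_shift[OF pe_finite T Eper])
        moreover have "ennreal (M a b * R a b s Q) = ennreal (M a b) * ennreal (R a b s Q)"
          using Mnn[OF a b] Rnn[OF a b] by (simp add: ennreal_mult)
        ultimately show "ennreal (M a b * R a b s Q) * infsum (\<lambda>k. c (shk T k Q)) UNIV =
            ennreal (M a b) * (ennreal (R a b s Q) * of_nat (card (?PE Q \<inter> E)))"
          by (simp add: mult.assoc)
      qed
      also have "\<dots> = ennreal (M a b) * infsum (\<lambda>P. ennreal (R a b s P) * of_nat (card (?PE P \<inter> E))) UNIV"
        by (rule ennr_cmult)
      finally show "infsum (\<lambda>k. infsum (\<lambda>P. ennreal (M a b * R a b (s + k * int T) P) * c P) UNIV) UNIV
          = ennreal (M a b) * infsum (\<lambda>P. ennreal (R a b s P) * of_nat (card (?PE P \<inter> E))) UNIV" .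
    qed simp
    also have "\<dots> = ennreal (M a b) * (\<Sum>s\<in>{0..<int T}. infsum (\<lambda>P. ennreal (R a b s P) *
                 of_nat (card (?PE P \<inter> E))) UNIV)"
      by (simp add: sum_distrib_left)
    finally show ?thesis .
  qed
  have "(\<Sum>a\<in>{1..N}. \<Sum>b\<in>{1..N}. ennreal (M a b) *
            (\<Sum>s\<in>{0..<int T}. infsum (\<lambda>P. ennreal (R a b s P) *
                 of_nat (card (?PE P \<inter> E))) UNIV))
      = (\<Sum>a\<in>{1..N}. \<Sum>b\<in>{1..N}. infsum (\<lambda>t. infsum (\<lambda>P. ennreal (M a b * R a b t P) * c P) UNIV) UNIV)"
    by (intro sum.cong refl S4[symmetric]) auto
  also have "\<dots> = (\<Sum>e\<in>EW. load ?\<sigma> f e)" using S2 S3 by simp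
  also have "\<dots> \<le> of_nat (card EW)" by (rule S1)
  finally show ?thesis by (simp add: EW_def)
qed


lemma lower_pair:
  fixes N T :: nat and sch :: "nat \<Rightarrow> nat \<Rightarrow> nat"
    and R :: "nat \<Rightarrow> nat \<Rightarrow> int \<Rightarrow> path \<Rightarrow> real" and E :: "vertex set"
  assumes orn: "ORN_design N T sch R"
    and a: "a \<in> {1..N}" and b: "b \<in> {1..N}" and ab: "a \<noteq> b"
    and ED: "\<And>u. sched T sch u a = b \<Longrightarrow> (a, u) \<in> E"
  shows "infsum (\<lambda>P. ennreal (R a b s P) * of_nat (card (phys_edges (sched T sch) (fst P) (snd P) \<inter> ({1..N} \<times> UNIV)))) UNIV
       + infsum (\<lambda>P. ennreal (R a b s P) * of_nat (card (phys_edges (sched T sch) (fst P) (snd P) \<inter> E))) UNIV \<ge> 2"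
proof -
  let ?\<sigma> = "sched T sch"
  let ?PE = "\<lambda>P. phys_edges ?\<sigma> (fst P) (snd P)"
  have cs: "connection_schedule N T sch" using orn by (simp add: ORN_design_def)
  have ob: "oblivious_routing N T sch R" using orn by (simp add: ORN_design_def)
  have Rsupp: "\<And>P. P \<notin> paths_from_to ?\<sigma> a b s \<Longrightarrow> R a b s P = 0"
    using ob a b unfolding oblivious_routing_def by blast
  have Rone: "(\<Sum>\<^sub>\<infinity>P. ennreal (R a b s P)) = 1"
    using ob a b unfolding oblivious_routing_def by blast
  have inN: "\<And>t x. x \<in> {1..N} \<Longrightarrow> ?\<sigma> t x \<in> {1..N}"
    using permutes_in_image[OF sched_perm[OF cs]] by blast
  have pw: "ennreal (R a b s P) * 2 \<le> ennreal (R a b s P) * of_nat (card (?PE P \<inter> ({1..N} \<times> UNIV)))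
       + ennreal (R a b s P) * of_nat (card (?PE P \<inter> E))" for P
  proof (cases "P \<in> paths_from_to ?\<sigma> a b s")
    case False
    then show ?thesis using Rsupp[OF False] by simp
  next
    case True
    then have P12: "fst P = (a, s) \<and> fst (end_vertex ?\<sigma> (fst P) (snd P)) = b"
      unfolding paths_from_to_def by (rule CollectD)
    then have P1: "fst P = (a, s)" and P2: "fst (end_vertex ?\<sigma> (fst P) (snd P)) = b" by blast+
    have fin: "finite (?PE P)" by (rule pe_finite)
    have sub: "?PE P \<subseteq> {1..N} \<times> UNIV" using pe_in[OF inN] P1 a by simp
    have cnt: "2 \<le> card (?PE P \<inter> ({1..N} \<times> UNIV)) + card (?PE P \<inter> E)"
    proof -
      have "fst (end_vertex ?\<sigma> (fst P) (snd P)) \<noteq> fst (fst P)" using P1 P2 ab by simp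
      from pe_two[OF this] show ?thesis
      proof
        assume "2 \<le> card (?PE P)"
        moreover have "?PE P \<inter> ({1..N} \<times> UNIV) = ?PE P" using sub by blast
        ultimately show ?thesis by simp
      next
        assume "\<exists>u. (fst (fst P), u) \<in> ?PE P \<and> ?\<sigma> u (fst (fst P)) = fst (end_vertex ?\<sigma> (fst P) (snd P))"
        then obtain u where u: "(a, u) \<in> ?PE P" "?\<sigma> u a = b" using P1 P2 by auto
        have "(a,u) \<in> E" by (rule ED[OF u(2)])
        then have "?PE P \<inter> E \<noteq> {}" using u by blast
        then have c1: "card (?PE P \<inter> E) \<ge> 1" using fin by (simp add: Suc_le_eq card_gt_0_iff)
        have "?PE P \<inter> ({1..N} \<times> UNIV) \<noteq> {}" using u sub by blast
        then have c2: "card (?PE P \<inter> ({1..N} \<times> UNIV)) \<ge> 1" using fin by (simp add: Suc_le_eq card_gt_0_iff)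
        show ?thesis using c1 c2 by simp
      qed
    qed
    have "ennreal (R a b s P) * 2 \<le> ennreal (R a b s P) * of_nat (card (?PE P \<inter> ({1..N} \<times> UNIV)) + card (?PE P \<inter> E))"
    proof (rule mult_left_mono)
      have "(2::ennreal) = of_nat 2" by simp
      also have "\<dots> \<le> of_nat (card (?PE P \<inter> ({1..N} \<times> UNIV)) + card (?PE P \<inter> E))"
        using cnt by (simp only: of_nat_le_iff)
      finally show "(2::ennreal) \<le> of_nat (card (?PE P \<inter> ({1..N} \<times> UNIV)) + card (?PE P \<inter> E))" .
    qed simp
    then show ?thesis by (simp add: distrib_left)
  qed
  have "(2::ennreal) = infsum (\<lambda>P. ennreal (R a b s P)) UNIV * 2" using Rone by simp
  also have "\<dots> = infsum (\<lambda>P. ennreal (R a b s P) * 2) UNIV" by (rule ennr_cmult_right[symmetric])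
  also have "\<dots> \<le> infsum (\<lambda>P. ennreal (R a b s P) * of_nat (card (?PE P \<inter> ({1..N} \<times> UNIV)))
       + ennreal (R a b s P) * of_nat (card (?PE P \<inter> E))) UNIV"
    by (rule ennr_mono) (rule pw)
  also have "\<dots> = infsum (\<lambda>P. ennreal (R a b s P) * of_nat (card (?PE P \<inter> ({1..N} \<times> UNIV)))) UNIV
       + infsum (\<lambda>P. ennreal (R a b s P) * of_nat (card (?PE P \<inter> E))) UNIV"
    by (rule ennr_add)
  finally show ?thesis .
qed


lemma offdiag_sum:
  fixes x :: "'a::comm_semiring_1"
  assumes "a \<in> {1..N}"
  shows "(\<Sum>b\<in>{1..N}. if a = b then 0 else x) = of_nat (N - 1) * x"
proof -
  have "(\<Sum>b\<in>{1..N}. if a = b then 0 else x) = (\<Sum>b\<in>{1..N} - {a}. x)"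
    by (rule sum.mono_neutral_cong_right) (use assms in auto)
  also have "\<dots> = of_nat (N - 1) * x" using assms by simp
  finally show ?thesis .
qed

lemma sum_fibres:
  fixes U :: "int set" and g :: "int \<Rightarrow> nat"
  assumes "finite U" "\<And>u. u \<in> U \<Longrightarrow> g u \<in> {1..N}"
  shows "(\<Sum>b\<in>{1..N}. card {u\<in>U. g u = b}) = card U"
proof -
  have c: "card {u\<in>U. g u = b} = (\<Sum>u\<in>U. if g u = b then 1 else 0)" for b
  proof -
    have "(\<Sum>u\<in>U. if g u = b then 1 else 0) = (\<Sum>u\<in>{u\<in>U. g u = b}. (1::nat))"
      by (rule sum.inter_filter[symmetric, OF assms(1)])
    then show ?thesis by simp
  qed
  have "(\<Sum>b\<in>{1..N}. card {u\<in>U. g u = b}) = (\<Sum>b\<in>{1..N}. \<Sum>u\<in>U. if g u = b then 1 else 0)"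
    by (simp only: c)
  also have "\<dots> = (\<Sum>u\<in>U. \<Sum>b\<in>{1..N}. if g u = b then 1 else 0)" by (rule sum.swap)
  also have "\<dots> = (\<Sum>u\<in>U. 1)"
  proof (rule sum.cong)
    fix u assume "u \<in> U"
    then have "g u \<in> {1..N}" by (rule assms(2))
    then show "(\<Sum>b\<in>{1..N}. if g u = b then 1 else 0) = (1::nat)" by simp
  qed simp
  finally show ?thesis by simp
qed

lemma offdiag_sum':
  fixes x :: "'a::comm_semiring_1"
  assumes "b \<in> {1..N}"
  shows "(\<Sum>a\<in>{1..N}. if a = b then 0 else x) = of_nat (N - 1) * x"
proof -
  have "(\<Sum>a\<in>{1..N}. if a = b then 0 else x) = (\<Sum>a\<in>{1..N} - {b}. x)"
    by (rule sum.mono_neutral_cong_right) (use assms in auto)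
  also have "\<dots> = of_nat (N - 1) * x" using assms by simp
  finally show ?thesis .
qed

theorem mainTheorem7:
  fixes N T :: nat and sch :: "nat \<Rightarrow> nat \<Rightarrow> nat"
    and R :: "nat \<Rightarrow> nat \<Rightarrow> int \<Rightarrow> path \<Rightarrow> real" and r :: real
  assumes "N \<ge> 2"
    and "ORN_design N T sch R"
    and "guarantees_throughput N T sch R r"
  shows "r \<le> 1/2 + 1 / (2 * (real N - 1))"
proof (cases "r \<le> 0")
  case True
  have "real N - 1 > 0" using assms(1) by simp
  then have "1 / (2 * (real N - 1)) > 0" by simp
  then show ?thesis using True by linarith
next
  case False
  then have rpos: "r > 0" by simp
  note N2 = assms(1) and orn = assms(2) and gt = assms(3)
  let ?\<sigma> = "sched T sch"
  let ?W = "UNIV \<times> {0..<int T}"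
  have T: "T \<ge> 1" using orn by (simp add: ORN_design_def connection_schedule_def)
  have cs: "connection_schedule N T sch" using orn by (simp add: ORN_design_def)
  have inN: "\<And>t x. x \<in> {1..N} \<Longrightarrow> ?\<sigma> t x \<in> {1..N}"
    using permutes_in_image[OF sched_perm[OF cs]] by blast
  have smod: "\<And>t. ?\<sigma> (t mod int T) = ?\<sigma> t" by (simp add: sched_def)
  define E0 where "E0 = {1..N} \<times> (UNIV :: int set)"
  define D where "D a b = {(i,u). i = a \<and> ?\<sigma> u a = b}" for a b
  define C where "C E a b = (\<Sum>s\<in>{0..<int T}. infsum (\<lambda>P. ennreal (R a b s P) *
          of_nat (card (phys_edges ?\<sigma> (fst P) (snd P) \<inter> E))) UNIV)" for E a b
  define K where "K = real N - 1"
  have Kpos: "K > 0" using N2 by (simp add: K_def)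
  have KN: "real (N - 1) = K" using N2 by (simp add: K_def of_nat_diff)
  define cr where "cr = r / K"
  have crpos: "cr > 0" using rpos Kpos by (simp add: cr_def)
  have cardE0: "card (E0 \<inter> ?W) = N * T"
  proof -
    have "E0 \<inter> ?W = {1..N} \<times> {0..<int T}" by (auto simp: E0_def)
    then show ?thesis by (simp add: card_cartesian_product)
  qed
  define Mu where "Mu a b = (if a = b then 0 else cr)" for a b :: nat
  have U: "(\<Sum>a\<in>{1..N}. \<Sum>b\<in>{1..N}. ennreal (Mu a b) * C E0 a b) \<le> of_nat (N * T)"
  proof -
    have dem: "demand_function N (\<lambda>t. Mu)" using crpos by (simp add: demand_function_def Mu_def)
    have req: "requests_at_most N (\<lambda>t. Mu) r"
      unfolding requests_at_most_def
    proof (intro allI conjI ballI)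
      fix a assume a: "a \<in> {1..N}"
      have "(\<Sum>b\<in>{1..N}. Mu a b) = of_nat (N - 1) * cr" unfolding Mu_def by (rule offdiag_sum[OF a])
      also have "(of_nat (N - 1) :: real) * cr = r" using KN Kpos by (simp add: cr_def)
      finally show "(\<Sum>b\<in>{1..N}. Mu a b) \<le> r" by simp
    next
      fix b assume b: "b \<in> {1..N}"
      have "(\<Sum>a\<in>{1..N}. Mu a b) = of_nat (N - 1) * cr" unfolding Mu_def by (rule offdiag_sum'[OF b])
      also have "(of_nat (N - 1) :: real) * cr = r" using KN Kpos by (simp add: cr_def)
      finally show "(\<Sum>a\<in>{1..N}. Mu a b) \<le> r" by simp
    qed
    have feas: "feasible N ?\<sigma> (induced_flow N R (\<lambda>t. Mu))"
      using gt dem req unfolding guarantees_throughput_def by blast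
    have "(\<Sum>a\<in>{1..N}. \<Sum>b\<in>{1..N}. ennreal (Mu a b) * C E0 a b) \<le> of_nat (card (E0 \<inter> ?W))"
      unfolding C_def
    proof (rule main_count[OF orn _ feas])
      show "\<And>a b. a \<in> {1..N} \<Longrightarrow> b \<in> {1..N} \<Longrightarrow> 0 \<le> Mu a b" using crpos by (simp add: Mu_def)
      show "E0 \<subseteq> {1..N} \<times> UNIV" by (simp add: E0_def)
      show "\<And>i t. ((i, t) \<in> E0) = ((i, t mod int T) \<in> E0)" by (simp add: E0_def)
    qed
    then show ?thesis using cardE0 by simp
  qed
  have S: "ennreal r * C (D a b) a b \<le> of_nat (card (D a b \<inter> ?W))"
    if a: "a \<in> {1..N}" and b: "b \<in> {1..N}" for a b
  proof -
    define Ms where "Ms a' b' = (if a' = a \<and> b' = b then r else 0)" for a' b' :: nat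
    have dem: "demand_function N (\<lambda>t. Ms)" using rpos by (simp add: demand_function_def Ms_def)
    have req: "requests_at_most N (\<lambda>t. Ms) r"
      unfolding requests_at_most_def
    proof (intro allI conjI ballI)
      fix a' assume a': "a' \<in> {1..N}"
      have "(\<Sum>b'\<in>{1..N}. Ms a' b') = (\<Sum>b'\<in>{1..N}. if b = b' then (if a' = a then r else 0) else 0)"
        by (rule sum.cong) (auto simp: Ms_def)
      also have "\<dots> = (if a' = a then r else 0)" using b by simp
      finally show "(\<Sum>b'\<in>{1..N}. Ms a' b') \<le> r" using rpos by simp
    next
      fix b' assume b': "b' \<in> {1..N}"
      have "(\<Sum>a'\<in>{1..N}. Ms a' b') = (\<Sum>a'\<in>{1..N}. if a = a' then (if b' = b then r else 0) else 0)"
        by (rule sum.cong) (auto simp: Ms_def)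
      also have "\<dots> = (if b' = b then r else 0)" using a by simp
      finally show "(\<Sum>a'\<in>{1..N}. Ms a' b') \<le> r" using rpos by simp
    qed
    have feas: "feasible N ?\<sigma> (induced_flow N R (\<lambda>t. Ms))"
      using gt dem req unfolding guarantees_throughput_def by blast
    have mc: "(\<Sum>a'\<in>{1..N}. \<Sum>b'\<in>{1..N}. ennreal (Ms a' b') * C (D a b) a' b') \<le> of_nat (card (D a b \<inter> ?W))"
      unfolding C_def
    proof (rule main_count[OF orn _ feas])
      show "\<And>a' b'. a' \<in> {1..N} \<Longrightarrow> b' \<in> {1..N} \<Longrightarrow> 0 \<le> Ms a' b'" using rpos by (simp add: Ms_def)
      show "D a b \<subseteq> {1..N} \<times> UNIV" using a by (auto simp: D_def)
      show "\<And>i t. ((i, t) \<in> D a b) = ((i, t mod int T) \<in> D a b)" by (simp add: D_def smod)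
    qed
    have inner: "(\<Sum>b'\<in>{1..N}. ennreal (Ms a' b') * C (D a b) a' b') = (if a' = a then ennreal r * C (D a b) a b else 0)" for a'
    proof -
      have "(\<Sum>b'\<in>{1..N}. ennreal (Ms a' b') * C (D a b) a' b')
          = (\<Sum>b'\<in>{1..N}. if b' = b then (if a' = a then ennreal r * C (D a b) a b else 0) else 0)"
        by (rule sum.cong) (auto simp: Ms_def)
      also have "\<dots> = (if a' = a then ennreal r * C (D a b) a b else 0)" using b by simp
      finally show ?thesis .
    qed
    have "(\<Sum>a'\<in>{1..N}. \<Sum>b'\<in>{1..N}. ennreal (Ms a' b') * C (D a b) a' b')
        = (\<Sum>a'\<in>{1..N}. if a' = a then ennreal r * C (D a b) a b else 0)"
      by (simp only: inner)
    also have "\<dots> = ennreal r * C (D a b) a b" using a by simp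
    finally show ?thesis using mc by simp
  qed
  have L: "C E0 a b + C (D a b) a b \<ge> 2 * of_nat T"
    if a: "a \<in> {1..N}" and b: "b \<in> {1..N}" and ab: "a \<noteq> b" for a b
  proof -
    have "C E0 a b + C (D a b) a b = (\<Sum>s\<in>{0..<int T}.
        infsum (\<lambda>P. ennreal (R a b s P) * of_nat (card (phys_edges ?\<sigma> (fst P) (snd P) \<inter> ({1..N} \<times> UNIV)))) UNIV
       + infsum (\<lambda>P. ennreal (R a b s P) * of_nat (card (phys_edges ?\<sigma> (fst P) (snd P) \<inter> D a b))) UNIV)"
      by (simp add: C_def E0_def sum.distrib)
    also have "\<dots> \<ge> (\<Sum>s\<in>{0..<int T}. 2)"
    proof (rule sum_mono)
      fix s
      show "2 \<le> infsum (\<lambda>P. ennreal (R a b s P) * of_nat (card (phys_edges ?\<sigma> (fst P) (snd P) \<inter> ({1..N} \<times> UNIV)))) UNIV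
       + infsum (\<lambda>P. ennreal (R a b s P) * of_nat (card (phys_edges ?\<sigma> (fst P) (snd P) \<inter> D a b))) UNIV"
        by (rule lower_pair[OF orn a b ab]) (simp add: D_def)
    qed
    moreover have "(\<Sum>s\<in>{0..<int T}. (2::ennreal)) = 2 * of_nat T" by (simp add: mult.commute)
    ultimately show ?thesis by simp
  qed
  have P4: "(\<Sum>a\<in>{1..N}. \<Sum>b\<in>{1..N}. card (D a b \<inter> ?W)) = N * T"
  proof -
    have "(\<Sum>b\<in>{1..N}. card (D a b \<inter> ?W)) = T" if a: "a \<in> {1..N}" for a
    proof -
      have "card (D a b \<inter> ?W) = card {u\<in>{0..<int T}. ?\<sigma> u a = b}" for b
      proof -
        have "D a b \<inter> ?W = (\<lambda>u. (a,u)) ` {u\<in>{0..<int T}. ?\<sigma> u a = b}" by (auto simp: D_def)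
        then show ?thesis by (simp add: card_image inj_on_def)
      qed
      then have "(\<Sum>b\<in>{1..N}. card (D a b \<inter> ?W)) = (\<Sum>b\<in>{1..N}. card {u\<in>{0..<int T}. ?\<sigma> u a = b})"
        by simp
      also have "\<dots> = card {0..<int T}"
        by (rule sum_fibres) (use inN a in auto)
      finally show ?thesis by simp
    qed
    then have "(\<Sum>a\<in>{1..N}. \<Sum>b\<in>{1..N}. card (D a b \<inter> ?W)) = (\<Sum>a\<in>{1..N}. T)"
      by (intro sum.cong) auto
    then show ?thesis by simp
  qed
  define H where "H a b = C E0 a b" for a b
  define G where "G a b = C (D a b) a b" for a b
  define d where "d a b = card (D a b \<inter> ?W)" for a b
  have U': "(\<Sum>a\<in>{1..N}. \<Sum>b\<in>{1..N}. if a = b then 0 else ennreal cr * H a b) \<le> of_nat (N * T)"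
  proof -
    have "(\<Sum>a\<in>{1..N}. \<Sum>b\<in>{1..N}. if a = b then 0 else ennreal cr * H a b)
        = (\<Sum>a\<in>{1..N}. \<Sum>b\<in>{1..N}. ennreal (Mu a b) * C E0 a b)"
      by (intro sum.cong refl) (simp add: Mu_def H_def)
    then show ?thesis using U by simp
  qed
  have V: "(\<Sum>a\<in>{1..N}. \<Sum>b\<in>{1..N}. if a = b then 0 else ennreal cr * G a b)
        \<le> ennreal (1 / K) * of_nat (N * T)"
  proof -
    have "(\<Sum>a\<in>{1..N}. \<Sum>b\<in>{1..N}. if a = b then 0 else ennreal cr * G a b)
        \<le> (\<Sum>a\<in>{1..N}. \<Sum>b\<in>{1..N}. ennreal (1 / K) * of_nat (d a b))"
    proof (intro sum_mono)
      fix a b assume a: "a \<in> {1..N}" and b: "b \<in> {1..N}"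
      have e: "ennreal cr = ennreal (1 / K) * ennreal r"
        using Kpos rpos by (subst ennreal_mult[symmetric]) (simp_all add: cr_def)
      have "ennreal cr * G a b = ennreal (1 / K) * (ennreal r * G a b)"
        by (simp only: e mult.assoc)
      also have "\<dots> \<le> ennreal (1 / K) * of_nat (d a b)"
        using S[OF a b] by (simp add: G_def d_def mult_left_mono)
      finally show "(if a = b then 0 else ennreal cr * G a b) \<le> ennreal (1 / K) * of_nat (d a b)"
        by simp
    qed
    also have "\<dots> = ennreal (1 / K) * of_nat (\<Sum>a\<in>{1..N}. \<Sum>b\<in>{1..N}. d a b)"
      by (simp add: sum_distrib_left)
    also have "\<dots> = ennreal (1 / K) * of_nat (N * T)" using P4 by (simp add: d_def)
    finally show ?thesis .
  qed
  have Lsum: "(\<Sum>a\<in>{1..N}. \<Sum>b\<in>{1..N}. if a = b then 0 else ennreal cr * (2 * of_nat T))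
      \<le> (\<Sum>a\<in>{1..N}. \<Sum>b\<in>{1..N}. if a = b then 0 else ennreal cr * H a b)
        + (\<Sum>a\<in>{1..N}. \<Sum>b\<in>{1..N}. if a = b then 0 else ennreal cr * G a b)"
  proof -
    have "(\<Sum>a\<in>{1..N}. \<Sum>b\<in>{1..N}. if a = b then 0 else ennreal cr * (2 * of_nat T))
       \<le> (\<Sum>a\<in>{1..N}. \<Sum>b\<in>{1..N}. (if a = b then 0 else ennreal cr * H a b) + (if a = b then 0 else ennreal cr * G a b))"
    proof (intro sum_mono)
      fix a b assume a: "a \<in> {1..N}" and b: "b \<in> {1..N}"
      show "(if a = b then 0 else ennreal cr * (2 * of_nat T)) \<le> (if a = b then 0 else ennreal cr * H a b) + (if a = b then 0 else ennreal cr * G a b)"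
      proof (cases "a = b")
        case False
        have "ennreal cr * (2 * of_nat T) \<le> ennreal cr * (H a b + G a b)"
          by (rule mult_left_mono) (use L[OF a b False] in \<open>simp_all add: H_def G_def\<close>)
        then show ?thesis using False by (simp add: distrib_left)
      qed simp
    qed
    then show ?thesis by (simp add: sum.distrib)
  qed
  have lhs: "(\<Sum>a\<in>{1..N}. \<Sum>b\<in>{1..N}. if a = b then 0 else ennreal cr * (2 * of_nat T))
      = ennreal (real N * (K * (cr * (2 * real T))))"
  proof -
    have "(\<Sum>a\<in>{1..N}. \<Sum>b\<in>{1..N}. if a = b then 0 else ennreal cr * (2 * of_nat T))
        = (\<Sum>a\<in>{1..N}. of_nat (N - 1) * (ennreal cr * (2 * of_nat T)))"
      by (intro sum.cong refl offdiag_sum) simp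
    also have "\<dots> = of_nat N * (of_nat (N - 1) * (ennreal cr * (2 * of_nat T)))" by simp
    also have "\<dots> = ennreal (real N * (K * (cr * (2 * real T))))"
    proof -
      have n1: "(of_nat N :: ennreal) = ennreal (real N)" by (rule ennreal_of_nat_eq_real_of_nat)
      have n2: "(of_nat (N - 1) :: ennreal) = ennreal K"
        by (simp only: ennreal_of_nat_eq_real_of_nat KN)
      have n3: "(of_nat T :: ennreal) = ennreal (real T)" by (rule ennreal_of_nat_eq_real_of_nat)
      have e: "ennreal (real N * (K * (cr * (2 * real T))))
          = ennreal (real N) * (ennreal K * (ennreal cr * (ennreal 2 * ennreal (real T))))"
        using Kpos crpos by (simp only: ennreal_mult mult_nonneg_nonneg of_nat_0_le_iff less_imp_le zero_le_numeral)
      show ?thesis unfolding e n1 n2 n3 by simp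
    qed
    finally show ?thesis .
  qed
  have "ennreal (real N * (K * (cr * (2 * real T)))) \<le> of_nat (N * T) + ennreal (1 / K) * of_nat (N * T)"
  proof -
    have X: "(\<Sum>a\<in>{1..N}. \<Sum>b\<in>{1..N}. if a = b then 0 else ennreal cr * (2 * of_nat T))
        \<le> of_nat (N * T) + ennreal (1 / K) * of_nat (N * T)"
      by (rule order_trans[OF Lsum add_mono[OF U' V]])
    show ?thesis using X unfolding lhs .
  qed
  also have "of_nat (N * T) + ennreal (1 / K) * of_nat (N * T) = ennreal (real N * real T + (1 / K) * (real N * real T))"
  proof -
    have nn1: "0 \<le> real N * real T" by simp
    have nn3: "0 \<le> 1 / K" using Kpos by simp
    have nn2: "0 \<le> (1 / K) * (real N * real T)" using nn1 nn3 by simp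
    have m: "(of_nat (N * T) :: ennreal) = ennreal (real N * real T)"
      by (simp only: ennreal_of_nat_eq_real_of_nat of_nat_mult)
    show ?thesis unfolding m by (simp only: ennreal_plus[OF nn1 nn2] ennreal_mult[OF nn3 nn1])
  qed
  finally have ineq0: "ennreal (real N * (K * (cr * (2 * real T)))) \<le> ennreal (real N * real T + (1 / K) * (real N * real T))" .
  have nnY: "0 \<le> real N * real T + (1 / K) * (real N * real T)" using Kpos by simp
  from ineq0 have ineq: "real N * (K * (cr * (2 * real T))) \<le> real N * real T + (1 / K) * (real N * real T)"
    by (simp only: ennreal_le_iff[OF nnY])
  have Kcr: "K * cr = r" using Kpos by (simp add: cr_def)
  have "real N * (K * (cr * (2 * real T))) = 2 * (K * cr) * (real N * real T)"
    by (simp add: algebra_simps)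
  then have e1: "real N * (K * (cr * (2 * real T))) = 2 * r * (real N * real T)"
    by (simp only: Kcr)
  have e2: "real N * real T + (1 / K) * (real N * real T) = (real N * real T) * (1 + 1 / K)"
    by (simp add: algebra_simps)
  have "2 * r * (real N * real T) \<le> (real N * real T) * (1 + 1 / K)"
    using ineq unfolding e1 e2 .
  moreover have "real N * real T > 0" using N2 T by simp
  ultimately have "2 * r \<le> 1 + 1 / K"
    using mult_le_cancel_left_pos[of "real N * real T" "2 * r" "1 + 1 / K"] by (simp only: mult.commute)
  then have h: "2 * r \<le> 1 + 1 / K" .
  define z where "z = 1 / K"
  have "2 * r \<le> 1 + z" using h by (simp add: z_def)
  then have rle: "r \<le> (1 + z) / 2" by simp
  have "1/2 + 1 / (2 * (real N - 1)) = (1 + z) / 2"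
    unfolding z_def K_def by (simp add: add_divide_distrib)
  then show ?thesis using rle by simp
qed

end
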